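(* Let $\mathcal{P}\subseteq[0,1]^n$ be a polytope and let $\tilde F_1,\tilde F_2$ be two different open faces of $\mathcal{P}$. If $\tilde F_1$ and $\tilde F_2$ are both contained in $(0,1)^n$, then no Bernoulli factory for $\mathcal{P}$ exists.
   Context: A face of $\mathcal{P}$ is a set of the form $F=\arg\max_{p\in\mathcal{P}}w^Tp$ for some $w\in\mathbb{R}^n$; its dimension is that of its affine span. The open face $\tilde F$ corresponding to a face $F$ is the set of points of $F$ that belong to no face of $\mathcal{P}$ of lower dimension. A Bernoulli factory with output set $V$ (for inputs $x\in[0,1]^n$) is a (possibly infinite) rooted binary tree whose internal nodes are labeled by an index $i\in[n]$ or a known constant $c\in(0,1)$ and whose leaves are labeled by elements of $V$; on input $x$ one walks from the root, at a node labeled $i$ flipping a fresh independent coin that is $1$ with probability $x_i$, at a node labeled $c$ a fresh coin of bias $c$, following the edge labeled by the outcome, and outputs the label of the leaf reached. For a polytope $\mathcal{P}$ with vertex set $V$, a Bernoulli factory for $\mathcal{P}$ is such a factory with output set $V$ that terminates almost surely on $\mathcal{P}\cap(0,1)^n$ and satisfies $\mathbb{E}[\mathcal{F}(x)]=x$ for all $x\in\mathcal{P}\cap(0,1)^n$. *)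

theory Defs
  imports "HOL-Analysis.Analysis"
begin

definition pface :: "(real^'n) set \<Rightarrow> (real^'n) set \<Rightarrow> bool" where
  "pface P F \<longleftrightarrow> (\<exists>w::real^'n. F = {p \<in> P. \<forall>q \<in> P. w \<bullet> q \<le> w \<bullet> p})"

definition open_face :: "(real^'n) set \<Rightarrow> (real^'n) set \<Rightarrow> (real^'n) set" where
  "open_face P F = {p \<in> F. \<not> (\<exists>G. pface P G \<and> aff_dim G < aff_dim F \<and> p \<in> G)}"

definition vertices :: "(real^'n) set \<Rightarrow> (real^'n) set" where
  "vertices P = {v. v extreme_point_of P}"

definition unit_cube :: "(real^'n) set" where
  "unit_cube = {x. \<forall>i. 0 \<le> x $ i \<and> x $ i \<le> 1}"

definition open_unit_cube :: "(real^'n) set" where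
  "open_unit_cube = {x. \<forall>i. 0 < x $ i \<and> x $ i < 1}"

text \<open>Bernoulli factory trees: a possibly infinite rooted binary tree is encoded by
  its labelling of all finite paths (lists of coin outcomes; True = coin came up 1).
  Labels of paths passing through a leaf are irrelevant (never reached).\<close>

datatype ('i, 'v) node = Leaf 'v | Coin 'i | Const real

fun edge_prob :: "('n, 'v) node \<Rightarrow> real^'n \<Rightarrow> bool \<Rightarrow> real" where
  "edge_prob (Leaf v) x b = 0"
| "edge_prob (Coin i) x b = (if b then x $ i else 1 - x $ i)"
| "edge_prob (Const c) x b = (if b then c else 1 - c)"

definition path_prob :: "(bool list \<Rightarrow> ('n, 'v) node) \<Rightarrow> real^'n \<Rightarrow> bool list \<Rightarrow> real" where
  "path_prob T x p = (\<Prod>k<length p. edge_prob (T (take k p)) x (p ! k))"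

definition leaf_paths :: "(bool list \<Rightarrow> ('n, 'v) node) \<Rightarrow> bool list set" where
  "leaf_paths T = {p. \<exists>v. T p = Leaf v}"

fun leaf_val :: "('i, real^'n) node \<Rightarrow> real^'n" where
  "leaf_val (Leaf v) = v"
| "leaf_val (Coin i) = 0"
| "leaf_val (Const c) = 0"

definition factory_tree :: "(real^'n) set \<Rightarrow> (bool list \<Rightarrow> ('n, real^'n) node) \<Rightarrow> bool" where
  "factory_tree V T \<longleftrightarrow>
     (\<forall>p. (\<forall>v. T p = Leaf v \<longrightarrow> v \<in> V) \<and> (\<forall>c. T p = Const c \<longrightarrow> 0 < c \<and> c < 1))"

definition bernoulli_factory_for :: "(real^'n) set \<Rightarrow> (bool list \<Rightarrow> ('n, real^'n) node) \<Rightarrow> bool" where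
  "bernoulli_factory_for P T \<longleftrightarrow> factory_tree (vertices P) T \<and>
     (\<forall>x \<in> P \<inter> open_unit_cube.
        ((\<lambda>p. path_prob T x p) has_sum 1) (leaf_paths T) \<and>
        ((\<lambda>p. path_prob T x p *\<^sub>R leaf_val (T p)) has_sum x) (leaf_paths T))"

end

theory Submission
  imports Defs
begin

lemma edge_prob_pos:
  assumes "factory_tree V T" "x \<in> open_unit_cube" "\<forall>v. T q \<noteq> Leaf v"
  shows "edge_prob (T q) x b > 0"
proof (cases "T q")
  case (Leaf v) then show ?thesis using assms by auto
next
  case (Coin i) then show ?thesis using assms(2) by (auto simp: open_unit_cube_def)
next
  case (Const c) then show ?thesis using assms(1) by (auto simp: factory_tree_def)
qed

lemma edge_prob_nonneg:
  assumes "factory_tree V T" "x \<in> open_unit_cube"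
  shows "edge_prob (T q) x b \<ge> 0"
proof (cases "\<exists>v. T q = Leaf v")
  case True then show ?thesis by auto
next
  case False then show ?thesis using edge_prob_pos[OF assms, of q b] by simp
qed

lemma path_prob_nonneg:
  assumes "factory_tree V T" "x \<in> open_unit_cube"
  shows "path_prob T x p \<ge> 0"
  unfolding path_prob_def using edge_prob_nonneg[OF assms] by (simp add: prod_nonneg)

lemma path_prob_zero:
  assumes "factory_tree V T" "x \<in> open_unit_cube"
  shows "path_prob T x p = 0 \<longleftrightarrow> (\<exists>k<length p. \<exists>v. T (take k p) = Leaf v)"
proof -
  have "path_prob T x p = 0 \<longleftrightarrow> (\<exists>k<length p. edge_prob (T (take k p)) x (p ! k) = 0)"
    unfolding path_prob_def by (simp add: Bex_def)
  also have "\<dots> \<longleftrightarrow> (\<exists>k<length p. \<exists>v. T (take k p) = Leaf v)"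
    using edge_prob_pos[OF assms] by (metis edge_prob.simps(1) less_irrefl)
  finally show ?thesis .
qed

lemma pface_repr:
  assumes "compact P" "P \<noteq> {}" "pface P F"
  shows "\<exists>w M. F = {p\<in>P. w \<bullet> p = M} \<and> (\<forall>q\<in>P. w \<bullet> q \<le> M) \<and> F \<noteq> {}"
proof -
  obtain w where w: "F = {p \<in> P. \<forall>q \<in> P. w \<bullet> q \<le> w \<bullet> p}" using assms(3) pface_def by blast
  have "continuous_on P (\<lambda>p. w \<bullet> p)" by (intro continuous_intros)
  then obtain z where z: "z \<in> P" "\<forall>q\<in>P. w \<bullet> q \<le> w \<bullet> z"
    using continuous_attains_sup[OF assms(1,2)] by blast
  have "F = {p\<in>P. w \<bullet> p = w \<bullet> z}"
    using z unfolding w by (auto intro: order_antisym)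
  moreover have "z \<in> F" using z w by auto
  ultimately show ?thesis using z by blast
qed

lemma pface_face_of:
  assumes "convex P" "F = {p\<in>P. w \<bullet> p = M}" "\<forall>q\<in>P. w \<bullet> q \<le> M"
  shows "F face_of P"
proof -
  have "F = P \<inter> {x. w \<bullet> x = M}" using assms(2) by auto
  then show ?thesis using face_of_Int_supporting_hyperplane_le[OF assms(1)] assms(3) by auto
qed

lemma pface_is_face:
  assumes "polytope P" "P \<noteq> {}" "pface P F"
  shows "F face_of P" "F \<noteq> {}"
  using pface_repr[OF polytope_imp_compact[OF assms(1)] assms(2,3)]
    pface_face_of[OF polytope_imp_convex[OF assms(1)]] by blast+

lemma open_face_nonempty:
  assumes "polytope P" "P \<noteq> {}" "pface P F"
  shows "open_face P F \<noteq> {}"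
proof -
  have fF: "F face_of P" "F \<noteq> {}" using pface_is_face[OF assms] by auto
  have cF: "convex F" using fF face_of_imp_convex by blast
  obtain p where p: "p \<in> rel_interior F" using rel_interior_eq_empty[OF cF] fF by blast
  have pF: "p \<in> F" using p rel_interior_subset by blast
  have "p \<in> open_face P F"
    unfolding open_face_def
  proof (safe)
    show "p \<in> F" by fact
  next
    fix G assume G: "pface P G" "aff_dim G < aff_dim F" "p \<in> G"
    have fG: "G face_of P" using pface_is_face[OF assms(1,2) G(1)] by auto
    have "(G \<inter> F) face_of P" by (rule face_of_Int[OF fG fF(1)])
    then have "(G \<inter> F) face_of F"
      by (rule face_of_subset) (use face_of_imp_subset[OF fF(1)] in auto)
    moreover have "p \<in> G \<inter> F \<inter> rel_interior F" using p pF G by auto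
    ultimately have "G \<inter> F = F" using face_of_disjoint_rel_interior by blast
    then have "F \<subseteq> G" by blast
    then have "aff_dim F \<le> aff_dim G" by (rule aff_dim_subset)
    then show False using G(2) by simp
  qed
  then show ?thesis by blast
qed

lemma pface_Int:
  assumes "compact P" "P \<noteq> {}" "pface P F1" "pface P F2" "F1 \<inter> F2 \<noteq> {}"
  shows "pface P (F1 \<inter> F2)"
proof -
  obtain w1 M1 where 1: "F1 = {p\<in>P. w1 \<bullet> p = M1}" "\<forall>q\<in>P. w1 \<bullet> q \<le> M1"
    using pface_repr[OF assms(1,2,3)] by blast
  obtain w2 M2 where 2: "F2 = {p\<in>P. w2 \<bullet> p = M2}" "\<forall>q\<in>P. w2 \<bullet> q \<le> M2"
    using pface_repr[OF assms(1,2,4)] by blast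
  obtain z where z: "z \<in> F1 \<inter> F2" using assms(5) by blast
  have "F1 \<inter> F2 = {p \<in> P. \<forall>q \<in> P. (w1 + w2) \<bullet> q \<le> (w1 + w2) \<bullet> p}"
  proof safe
    fix p q assume "p \<in> F1" "p \<in> F2" "q \<in> P"
    then show "(w1 + w2) \<bullet> q \<le> (w1 + w2) \<bullet> p" using 1 2 by (auto simp: inner_add_left add_mono)
  next
    fix p assume p: "p \<in> P" "\<forall>q \<in> P. (w1 + w2) \<bullet> q \<le> (w1 + w2) \<bullet> p"
    have "(w1 + w2) \<bullet> z \<le> (w1 + w2) \<bullet> p" using p z 1 2 by auto
    then have s: "M1 + M2 \<le> w1 \<bullet> p + w2 \<bullet> p" using z 1 2 by (auto simp: inner_add_left)
    have l: "w1 \<bullet> p \<le> M1" "w2 \<bullet> p \<le> M2" using 1 2 p by auto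
    have "w1 \<bullet> p = M1" "w2 \<bullet> p = M2" using s l by linarith+
    then show "p \<in> F1" "p \<in> F2" using 1 2 p by auto
  qed (use 1 2 in auto)
  then show ?thesis unfolding pface_def by blast
qed

lemma subset_of_open_face:
  assumes "polytope P" "P \<noteq> {}" "pface P F1" "pface P F2" "open_face P F1 \<subseteq> F2"
  shows "F1 \<subseteq> F2"
proof -
  obtain p where p: "p \<in> open_face P F1" using open_face_nonempty[OF assms(1,2,3)] by blast
  have pF: "p \<in> F1" "p \<in> F2" using p assms(5) open_face_def by auto
  have pI: "pface P (F1 \<inter> F2)"
    using pface_Int[OF polytope_imp_compact[OF assms(1)] assms(2,3,4)] pF by blast
  have "\<not> aff_dim (F1 \<inter> F2) < aff_dim F1" using p pI pF unfolding open_face_def by blast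
  moreover have f1: "F1 face_of P" using pface_is_face[OF assms(1,2,3)] by auto
  moreover have "(F1 \<inter> F2) face_of P" by (rule face_of_Int[OF f1 pface_is_face(1)[OF assms(1,2,4)]])
  then have "(F1 \<inter> F2) face_of F1"
    by (rule face_of_subset) (use face_of_imp_subset[OF f1] in auto)
  ultimately have "F1 \<inter> F2 = F1" using face_of_aff_dim_lt[OF face_of_imp_convex[OF f1]] by blast
  then show ?thesis by blast
qed

lemma factory_face:
  assumes T: "bernoulli_factory_for P T"
    and F: "F = {p\<in>P. w \<bullet> p = M}" "\<forall>q\<in>P. w \<bullet> q \<le> M"
    and x: "x \<in> F" "x \<in> open_unit_cube"
    and y: "y \<in> P" "y \<in> open_unit_cube"
  shows "y \<in> F"
proof -
  define L where "L = leaf_paths T"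
  define lv where "lv p = leaf_val (T p)" for p
  have ft: "factory_tree (vertices P) T" using T unfolding bernoulli_factory_for_def by (rule conjunct1)
  have Tall: "\<forall>z\<in>P \<inter> open_unit_cube. ((\<lambda>p. path_prob T z p) has_sum 1) L \<and>
        ((\<lambda>p. path_prob T z p *\<^sub>R lv p) has_sum z) L"
    using T unfolding bernoulli_factory_for_def L_def lv_def by (rule conjunct2)
  have xP: "x \<in> P" using x F by auto
  have lvP: "lv p \<in> P" if pL: "p \<in> L" for p
  proof -
    obtain v where v: "T p = Leaf v" using pL unfolding L_def leaf_paths_def by blast
    then have "v \<in> vertices P" using ft unfolding factory_tree_def by blast
    then show ?thesis using v unfolding lv_def by (simp add: vertices_def extreme_point_of_def)
  qed
  have sums: "((\<lambda>p. path_prob T z p) has_sum 1) L"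
      "((\<lambda>p. path_prob T z p * (w \<bullet> lv p)) has_sum (w \<bullet> z)) L"
    if "z \<in> P" "z \<in> open_unit_cube" for z
  proof -
    have zz: "z \<in> P \<inter> open_unit_cube" using that by blast
    show "((\<lambda>p. path_prob T z p) has_sum 1) L" using bspec[OF Tall zz] by (rule conjunct1)
    have "((\<lambda>p. path_prob T z p *\<^sub>R lv p) has_sum z) L" using bspec[OF Tall zz] by (rule conjunct2)
    from has_sum_bounded_linear[OF bounded_linear_inner_right this, of w]
    show "((\<lambda>p. path_prob T z p * (w \<bullet> lv p)) has_sum (w \<bullet> z)) L" by simp
  qed
  have wx: "w \<bullet> x = M" using x F by auto
  have s1: "((\<lambda>p. path_prob T x p * M) has_sum M) L"
    using has_sum_cmult_left[OF sums(1)[OF xP x(2)], of M] by simp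
  have s2: "((\<lambda>p. path_prob T x p * (w \<bullet> lv p) * (-1)) has_sum (- M)) L"
    using has_sum_cmult_left[OF sums(2)[OF xP x(2)], of "-1"] wx by simp
  have s3: "((\<lambda>p. path_prob T x p * (M - w \<bullet> lv p)) has_sum 0) L"
  proof -
    have "((\<lambda>p. path_prob T x p * M + path_prob T x p * (w \<bullet> lv p) * (-1)) has_sum (M + - M)) L"
      by (rule has_sum_add[OF s1 s2])
    then show ?thesis by (simp add: right_diff_distrib)
  qed
  have nn: "path_prob T x p * (M - w \<bullet> lv p) \<ge> 0" if "p \<in> L" for p
  proof -
    have "w \<bullet> lv p \<le> M" using F(2) lvP[OF that] by blast
    then show ?thesis using path_prob_nonneg[OF ft x(2), of p] by simp
  qed
  have zero: "path_prob T x q * (M - w \<bullet> lv q) \<le> 0" if q: "q \<in> L" for q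
  proof -
    have "((\<lambda>p. path_prob T x p * (M - w \<bullet> lv p)) has_sum (path_prob T x q * (M - w \<bullet> lv q))) {q}"
      using has_sum_finite[of "{q}"] by simp
    from has_sum_mono_neutral[OF this s3] show ?thesis using q nn by auto
  qed
  have key: "path_prob T y q * (w \<bullet> lv q) = path_prob T y q * M" if q: "q \<in> L" for q
  proof (cases "path_prob T x q = 0")
    case True
    then have "path_prob T y q = 0"
      unfolding path_prob_zero[OF ft x(2)] path_prob_zero[OF ft y(2)] .
    then show ?thesis by simp
  next
    case False
    then have pos: "path_prob T x q > 0" using path_prob_nonneg[OF ft x(2), of q] by linarith
    have "\<not> (M - w \<bullet> lv q > 0)"
    proof
      assume "M - w \<bullet> lv q > 0"
      then have "path_prob T x q * (M - w \<bullet> lv q) > 0" using pos by (rule mult_pos_pos[rotated])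
      then show False using zero[OF q] by linarith
    qed
    moreover have "w \<bullet> lv q \<le> M" using F(2) lvP[OF q] by blast
    ultimately have "w \<bullet> lv q = M" by linarith
    then show ?thesis by simp
  qed
  have "((\<lambda>p. path_prob T y p * (w \<bullet> lv p)) has_sum (w \<bullet> y)) L = ((\<lambda>p. path_prob T y p * M) has_sum (w \<bullet> y)) L"
    by (rule has_sum_cong) (rule key)
  then have "((\<lambda>p. path_prob T y p * M) has_sum (w \<bullet> y)) L" using sums(2)[OF y] by blast
  moreover have "((\<lambda>p. path_prob T y p * M) has_sum M) L"
    using has_sum_cmult_left[OF sums(1)[OF y], of M] by simp
  ultimately have "w \<bullet> y = M" by (rule has_sum_unique)
  then show ?thesis using F y by auto
qed

theorem lemmaB5:
  fixes P F1 F2 :: "(real^'n) set"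
  assumes "polytope P" and "P \<subseteq> unit_cube"
    and "pface P F1" and "pface P F2"
    and "open_face P F1 \<noteq> open_face P F2"
    and "open_face P F1 \<subseteq> open_unit_cube" and "open_face P F2 \<subseteq> open_unit_cube"
  shows "\<not> (\<exists>T. bernoulli_factory_for P T)"
proof
  assume "\<exists>T. bernoulli_factory_for P T"
  then obtain T where T: "bernoulli_factory_for P T" by blast
  have Pne: "P \<noteq> {}"
  proof
    assume "P = {}"
    then have "F1 = {}" "F2 = {}" using assms(3,4) pface_def by auto
    then show False using assms(5) by simp
  qed
  have cP: "compact P" using assms(1) polytope_imp_compact by blast
  have all: "P \<inter> open_unit_cube \<subseteq> F" if F: "pface P F" "open_face P F \<subseteq> open_unit_cube" for F
  proof
    fix y assume y: "y \<in> P \<inter> open_unit_cube"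
    obtain w M where wM: "F = {p\<in>P. w \<bullet> p = M}" "\<forall>q\<in>P. w \<bullet> q \<le> M"
      using pface_repr[OF cP Pne F(1)] by blast
    obtain x where x: "x \<in> open_face P F" using open_face_nonempty[OF assms(1) Pne F(1)] by blast
    have "x \<in> F" "x \<in> open_unit_cube" using x F(2) open_face_def by auto
    then show "y \<in> F" using factory_face[OF T wM] y by blast
  qed
  have s1: "F1 \<subseteq> P" "F2 \<subseteq> P" using assms(3,4) pface_def by auto
  have "open_face P F1 \<subseteq> F2"
    using all[OF assms(4,7)] assms(6) s1 open_face_def[of P F1] by auto
  then have "F1 \<subseteq> F2" using subset_of_open_face[OF assms(1) Pne assms(3,4)] by blast
  moreover have "open_face P F2 \<subseteq> F1"
    using all[OF assms(3,6)] assms(7) s1 open_face_def[of P F2] by auto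
  then have "F2 \<subseteq> F1" using subset_of_open_face[OF assms(1) Pne assms(4,3)] by blast
  ultimately show False using assms(5) by simp
qed

end
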